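(* Let $\|\cdot\|$ be a $C^2$ and strictly convex norm on $\mathbb{R}^2$. Then for every $\varepsilon>0$ there exists $R>0$ such that for all points $a,b\in\mathbb{R}^2$ with $a\neq b$ and $\|b-a\|=1$, $$\sup\{\mathrm{dist}(z,L(a,b)) : z\in M(a,b)\setminus B(a,R)\}\leq\varepsilon,$$ where $\mathrm{dist}$ is the Euclidean distance and $B(a,R)$ the Euclidean open ball of center $a$ and radius $R$.
   Context: The norm is called $C^2$ and strictly convex if $x\mapsto\|x\|$ is $C^2$ on $\mathbb{R}^2\setminus\{0\}$ and the unit sphere $\partial B_{\|\cdot\|}(0,1)=\{\|x\|=1\}$ is a $C^2$ curve with strictly positive curvature (equivalently $D^2\|x\|(h,h)>0$ for $x\ne0$, $h$ not parallel to $x$). For $a,b\in\mathbb{R}^2$ the curve bisector is $M(a,b)=\{z\in\mathbb{R}^2:\|a-z\|=\|b-z\|\}$. For $x$ with $\|x\|=1$, there are exactly two points $y_1,y_2$ (with $y_2=-y_1$) on the unit sphere at which the tangent line to the unit sphere is directed by $x$; $L_x$ denotes the line through $y_1$ and $y_2$ (a line through the origin). For $x\neq0$ with $\|x\|\neq1$, $L_x:=L_{x/\|x\|}$. Finally $L(a,b):=\frac{a+b}{2}+L_{b-a}$. *)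

theory Defs
  imports "HOL-Analysis.Analysis"
begin

definition is_norm2 :: "(real^2 \<Rightarrow> real) \<Rightarrow> bool" where
  "is_norm2 N \<longleftrightarrow>
     (\<forall>x. 0 \<le> N x) \<and> (\<forall>x. N x = 0 \<longrightarrow> x = 0) \<and>
     (\<forall>c x. N (c *\<^sub>R x) = \<bar>c\<bar> * N x) \<and>
     (\<forall>x y. N (x + y) \<le> N x + N y)"

definition C2_strictly_convex_norm :: "(real^2 \<Rightarrow> real) \<Rightarrow> bool" where
  "C2_strictly_convex_norm N \<longleftrightarrow> is_norm2 N \<and>
     (\<exists>G :: real^2 \<Rightarrow> real^2. \<exists>H :: real^2 \<Rightarrow> real^2^2.
        (\<forall>x. x \<noteq> 0 \<longrightarrow> (N has_derivative (\<lambda>h. G x \<bullet> h)) (at x)) \<and>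
        (\<forall>x. x \<noteq> 0 \<longrightarrow> (G has_derivative (\<lambda>h. H x *v h)) (at x)) \<and>
        continuous_on (UNIV - {0}) H \<and>
        (\<forall>x h. x \<noteq> 0 \<longrightarrow> \<not> (\<exists>c. h = c *\<^sub>R x) \<longrightarrow> h \<bullet> (H x *v h) > 0))"

definition bisector :: "(real^2 \<Rightarrow> real) \<Rightarrow> real^2 \<Rightarrow> real^2 \<Rightarrow> (real^2) set" where
  "bisector N a b = {z. N (a - z) = N (b - z)}"

text \<open>The tangent line to the unit sphere \<open>{N = 1}\<close> at \<open>y\<close> is directed by \<open>u\<close>
  iff the differential of \<open>N\<close> at \<open>y\<close> vanishes on \<open>u\<close>.\<close>
definition tangent_directed :: "(real^2 \<Rightarrow> real) \<Rightarrow> real^2 \<Rightarrow> real^2 \<Rightarrow> bool" where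
  "tangent_directed N y u \<longleftrightarrow> (\<exists>D. (N has_derivative D) (at y) \<and> D u = 0)"

text \<open>\<open>L_x\<close>: the line through the (two, antipodal) points \<open>y\<close> of the unit sphere at which
  the tangent is directed by \<open>x / N x\<close>; written as the union of the lines \<open>\<real> y\<close>.\<close>
definition Ldir :: "(real^2 \<Rightarrow> real) \<Rightarrow> real^2 \<Rightarrow> (real^2) set" where
  "Ldir N x = (let u = x /\<^sub>R N x in
      {t *\<^sub>R y | t y. N y = 1 \<and> tangent_directed N y u})"

definition Lab :: "(real^2 \<Rightarrow> real) \<Rightarrow> real^2 \<Rightarrow> real^2 \<Rightarrow> (real^2) set" where
  "Lab N a b = (\<lambda>v. (1/2) *\<^sub>R (a + b) + v) ` Ldir N (b - a)"

end

theory Submission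
  imports Defs
begin


lemma norm_neg: "is_norm2 N \<Longrightarrow> N (- x) = N x"
  unfolding is_norm2_def by (metis abs_minus_cancel abs_one mult_1 scaleR_minus1_left)

lemma norm_homp: "is_norm2 N \<Longrightarrow> 0 \<le> c \<Longrightarrow> N (c *\<^sub>R x) = c * N x"
  unfolding is_norm2_def by simp

lemma norm_pos: "is_norm2 N \<Longrightarrow> x \<noteq> 0 \<Longrightarrow> N x > 0"
  unfolding is_norm2_def by (metis less_eq_real_def)

lemma norm_cont: assumes "is_norm2 N" shows "continuous_on UNIV N"
proof -
  have "convex_on UNIV N"
  proof (rule convex_onI)
    fix t :: real and x y :: "real^2" assume t: "0 < t" "t < 1"
    have "N ((1 - t) *\<^sub>R x + t *\<^sub>R y) \<le> N ((1 - t) *\<^sub>R x) + N (t *\<^sub>R y)"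
      using assms unfolding is_norm2_def by blast
    also have "\<dots> = (1 - t) * N x + t * N y" using norm_homp[OF assms] t by simp
    finally show "N ((1 - t) *\<^sub>R x + t *\<^sub>R y) \<le> (1 - t) * N x + t * N y" .
  qed (simp)
  then show ?thesis by (intro convex_on_continuous) auto
qed

lemma norm_lower: assumes "is_norm2 N" shows "\<exists>c>0. \<forall>x. N x \<ge> c * norm x"
proof -
  have cs: "compact (sphere (0::real^2) 1)" by simp
  have ne: "sphere (0::real^2) 1 \<noteq> {}" by simp
  obtain x0 where x0: "x0 \<in> sphere 0 1" "\<forall>y\<in>sphere 0 1. N x0 \<le> N y"
    using continuous_attains_inf[OF cs ne continuous_on_subset[OF norm_cont[OF assms]]] by blast
  have p: "N x0 > 0" using x0(1) norm_pos[OF assms, of x0] by (cases "x0 = 0") auto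
  show ?thesis
  proof (intro exI[of _ "N x0"] conjI allI p)
    fix x :: "real^2"
    show "N x0 * norm x \<le> N x"
    proof (cases "x = 0")
      case True then show ?thesis using assms unfolding is_norm2_def by simp
    next
      case False
      have "N x0 \<le> N ((1 / norm x) *\<^sub>R x)" using x0(2) False by simp
      also have "\<dots> = N x / norm x" using norm_homp[OF assms, of "1/norm x" x] by simp
      finally show ?thesis using False by (simp add: field_simps)
    qed
  qed
qed

locale cnorm =
  fixes N :: "real^2 \<Rightarrow> real" and G :: "real^2 \<Rightarrow> real^2" and H :: "real^2 \<Rightarrow> real^2^2"
  assumes nN: "is_norm2 N"
  and dN: "\<And>x. x \<noteq> 0 \<Longrightarrow> (N has_derivative (\<lambda>h. G x \<bullet> h)) (at x)"
  and dG: "\<And>x. x \<noteq> 0 \<Longrightarrow> (G has_derivative (\<lambda>h. H x *v h)) (at x)"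
  and cH: "continuous_on (UNIV - {0}) H"
  and posH: "\<And>x h. x \<noteq> 0 \<Longrightarrow> \<not> (\<exists>c. h = c *\<^sub>R x) \<Longrightarrow> h \<bullet> (H x *v h) > 0"
begin

lemma G_hom: assumes "x \<noteq> 0" "t > 0" shows "G (t *\<^sub>R x) = G x"
proof -
  have tx: "t *\<^sub>R x \<noteq> 0" using assms by simp
  have 1: "((\<lambda>y. N (t *\<^sub>R y)) has_derivative (\<lambda>h. G (t *\<^sub>R x) \<bullet> (t *\<^sub>R h))) (at x)"
    using has_derivative_compose[OF has_derivative_scaleR_right[OF has_derivative_ident] dN[OF tx]] by simp
  have eq: "(\<lambda>y. N (t *\<^sub>R y)) = (\<lambda>y. t * N y)" using norm_homp[OF nN] assms by auto
  have 2: "((\<lambda>y. t * N y) has_derivative (\<lambda>h. t * (G x \<bullet> h))) (at x)"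
    by (rule has_derivative_mult_right[OF dN[OF assms(1)]])
  have "(\<lambda>h. G (t *\<^sub>R x) \<bullet> (t *\<^sub>R h)) = (\<lambda>h. t * (G x \<bullet> h))"
    using has_derivative_unique[OF 1[unfolded eq] 2] .
  then have "\<And>h. t * ((G (t *\<^sub>R x) - G x) \<bullet> h) = 0"
    by (metis (no_types) inner_diff_left inner_scaleR_right right_diff_distrib' diff_self)
  then have "(G (t *\<^sub>R x) - G x) \<bullet> (G (t *\<^sub>R x) - G x) = 0" using assms by simp
  then show ?thesis by simp
qed

lemma H_hom: assumes "x \<noteq> 0" "t > 0" shows "t *\<^sub>R (H (t *\<^sub>R x) *v h) = H x *v h"
proof -
  have tx: "t *\<^sub>R x \<noteq> 0" using assms by simp
  have 1: "((\<lambda>y. G (t *\<^sub>R y)) has_derivative (\<lambda>h. H (t *\<^sub>R x) *v (t *\<^sub>R h))) (at x)"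
    using has_derivative_compose[OF has_derivative_scaleR_right[OF has_derivative_ident] dG[OF tx]] by simp
  have eq: "(\<lambda>y. G (t *\<^sub>R y)) = G"
  proof
    fix y show "G (t *\<^sub>R y) = G y" using G_hom[of y t] assms by (cases "y = 0") auto
  qed
  have "(\<lambda>h. H (t *\<^sub>R x) *v (t *\<^sub>R h)) = (\<lambda>h. H x *v h)"
    using has_derivative_unique[OF 1[unfolded eq] dG[OF assms(1)]] .
  then show ?thesis by (metis matrix_vector_mult_scaleR)
qed

lemma euler: assumes "x \<noteq> 0" shows "G x \<bullet> x = N x"
proof -
  have 1: "((\<lambda>s::real. N (x + s *\<^sub>R x)) has_derivative (\<lambda>s. G x \<bullet> (s *\<^sub>R x))) (at 0)"
  proof -
    have a: "((\<lambda>s::real. x + s *\<^sub>R x) has_derivative (\<lambda>s. s *\<^sub>R x)) (at 0)"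
      by (auto intro!: derivative_eq_intros)
    have b: "(N has_derivative (\<lambda>h. G x \<bullet> h)) (at ((\<lambda>s::real. x + s *\<^sub>R x) 0))"
      using dN[OF assms] by simp
    show ?thesis using has_derivative_compose[OF a b] by simp
  qed
  have 2: "((\<lambda>s::real. N (x + s *\<^sub>R x)) has_derivative (\<lambda>s. s * N x)) (at 0)"
  proof (rule has_derivative_transform_within_open[of "\<lambda>s. (1 + s) * N x" _ _ _ "{-1<..}"])
    show "((\<lambda>s. (1 + s) * N x) has_derivative (\<lambda>s. s * N x)) (at 0)"
      by (auto intro!: derivative_eq_intros)
    fix s :: real assume "s \<in> {-1<..}"
    then show "(1 + s) * N x = N (x + s *\<^sub>R x)"
      using norm_homp[OF nN, of "1 + s" x] by (simp add: algebra_simps)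
  qed auto
  have "(\<lambda>s. G x \<bullet> (s *\<^sub>R x)) = (\<lambda>s. s * N x)" using has_derivative_unique[OF 1 2] .
  then show ?thesis by (metis inner_scaleR_right mult_1)
qed

lemma G_cont: "continuous_on (UNIV - {0}) G"
  by (metis Diff_iff continuous_at_imp_continuous_on dG has_derivative_continuous insertI1)

end




lemma core1d:
  fixes \<phi> \<psi> \<psi>' :: "real \<Rightarrow> real"
  assumes d\<phi>: "\<And>s. -1/2 \<le> s \<Longrightarrow> s \<le> 1/2 \<Longrightarrow> (\<phi> has_real_derivative \<psi> s) (at s)"
  and d\<psi>: "\<And>s. -1/2 \<le> s \<Longrightarrow> s \<le> 1/2 \<Longrightarrow> (\<psi> has_real_derivative \<psi>' s) (at s)"
  and eq: "\<phi> (1/2) = \<phi> (-1/2)"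
  and \<sigma>: "-1/2 \<le> \<sigma>" "\<sigma> \<le> 1/2" "\<psi> \<sigma> = 0"
  and lo: "\<And>s. -1/2 \<le> s \<Longrightarrow> s \<le> 1/2 \<Longrightarrow> \<psi>' s \<ge> m"
  and var: "\<And>s s'. -1/2 \<le> s \<Longrightarrow> s \<le> 1/2 \<Longrightarrow> -1/2 \<le> s' \<Longrightarrow> s' \<le> 1/2 \<Longrightarrow> \<bar>\<psi>' s - \<psi>' s'\<bar> \<le> e"
  shows "\<bar>\<sigma>\<bar> * m \<le> e / 4"
proof -
  have dg: "((\<lambda>s. \<phi> s - \<phi> (-s)) has_real_derivative (\<psi> s + \<psi> (-s))) (at s)"
    if "0 \<le> s" "s \<le> 1/2" for s
  proof -
    have "((\<lambda>s. \<phi> (-s)) has_real_derivative (\<psi> (-s) * -1)) (at s)"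
      using DERIV_chain2[OF d\<phi>[of "-s"] DERIV_minus[OF DERIV_ident]] that by simp
    then have "((\<lambda>s. \<phi> (-s)) has_real_derivative (- \<psi> (-s))) (at s)" by simp
    from DERIV_diff[OF d\<phi>[of s] this] that show ?thesis by simp
  qed
  obtain s1 where s1: "0 < s1" "s1 < 1/2"
    "(\<phi> (1/2) - \<phi> (-(1/2))) - (\<phi> 0 - \<phi> (-0)) = (1/2 - 0) * (\<psi> s1 + \<psi> (-s1))"
    using MVT2[of 0 "1/2" "\<lambda>s. \<phi> s - \<phi> (-s)" "\<lambda>s. \<psi> s + \<psi> (-s)", OF _ dg] by auto
  have s1': "\<psi> s1 + \<psi> (-s1) = 0" using s1(3) eq by simp
  obtain a where a: "0 < a" "a < s1" "\<psi> s1 - \<psi> 0 = (s1 - 0) * \<psi>' a"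
    using MVT2[of 0 s1 \<psi> \<psi>', OF s1(1) d\<psi>] s1 by auto
  obtain b where b: "-s1 < b" "b < 0" "\<psi> 0 - \<psi> (-s1) = (0 - -s1) * \<psi>' b"
    using MVT2[of "-s1" 0 \<psi> \<psi>', OF _ d\<psi>] s1 by auto
  have "-2 * \<psi> 0 = s1 * (\<psi>' a - \<psi>' b)" using a(3) b(3) s1' by (simp add: algebra_simps)
  moreover have "\<bar>\<psi>' a - \<psi>' b\<bar> \<le> e" using var[of a b] a b s1 by simp
  ultimately have p0: "\<bar>\<psi> 0\<bar> \<le> e / 4"
  proof -
    assume h: "-2 * \<psi> 0 = s1 * (\<psi>' a - \<psi>' b)" "\<bar>\<psi>' a - \<psi>' b\<bar> \<le> e"
    have "2 * \<bar>\<psi> 0\<bar> = s1 * \<bar>\<psi>' a - \<psi>' b\<bar>"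
      using arg_cong[OF h(1), of abs] s1(1) by (simp add: abs_mult)
    also have "\<dots> \<le> (1/2) * e" using h(2) s1 by (intro mult_mono) auto
    finally show ?thesis by simp
  qed
  have "\<bar>\<sigma>\<bar> * m \<le> \<bar>\<psi> 0\<bar>"
  proof (cases "\<sigma> > 0")
    case True
    obtain c where c: "0 < c" "c < \<sigma>" "\<psi> \<sigma> - \<psi> 0 = (\<sigma> - 0) * \<psi>' c"
      using MVT2[of 0 \<sigma> \<psi> \<psi>', OF True d\<psi>] \<sigma> by auto
    have "\<sigma> * m \<le> \<sigma> * \<psi>' c" using lo[of c] c \<sigma> True by (intro mult_left_mono) auto
    moreover have "\<sigma> * \<psi>' c = - \<psi> 0" using c \<sigma> by simp
    ultimately show ?thesis using True by simp
  next
    case False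
    show ?thesis
    proof (cases "\<sigma> = 0")
      case True then show ?thesis by simp
    next
      case F: False
      then have neg: "\<sigma> < 0" using False by simp
      obtain c where c: "\<sigma> < c" "c < 0" "\<psi> 0 - \<psi> \<sigma> = (0 - \<sigma>) * \<psi>' c"
        using MVT2[of \<sigma> 0 \<psi> \<psi>', OF neg d\<psi>] \<sigma> by auto
      have i1: "(-\<sigma>) * m \<le> (-\<sigma>) * \<psi>' c" using lo[of c] c \<sigma> neg by (intro mult_left_mono) auto
      have i2: "(-\<sigma>) * \<psi>' c = \<psi> 0" using c \<sigma> by simp
      have i3: "\<psi> 0 \<le> \<bar>\<psi> 0\<bar>" by simp
      show ?thesis unfolding abs_of_neg[OF neg] using i1 i2 i3 by linarith
    qed
  qed
  then show ?thesis using p0 by simp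
qed




lemma quad_form: "w \<bullet> (A *v w) = (\<Sum>i\<in>UNIV. \<Sum>j\<in>UNIV. w$i * (A$i$j * w$j))"
  unfolding inner_vec_def matrix_vector_mult_def by (simp add: sum_distrib_left)

context cnorm begin

definition F :: "real^2 \<Rightarrow> real^2 \<Rightarrow> real" where "F x w = w \<bullet> (H x *v w)"

definition ann :: "(real^2) set" where "ann = {x. 1/2 \<le> norm x \<and> norm x \<le> 2}"

lemma compact_ann: "compact ann"
proof -
  have "ann = cball 0 2 - ball 0 (1/2)" unfolding ann_def by auto
  then show ?thesis by (metis compact_cball compact_diff open_ball)
qed

lemma F_cont: assumes "S \<subseteq> (UNIV - {0}) \<times> UNIV" shows "continuous_on S (\<lambda>p. F (fst p) (snd p))"
proof -
  have cH': "continuous_on S (\<lambda>p. H (fst p))"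
    by (rule continuous_on_compose2[OF cH continuous_on_fst]) (use assms in auto)
  show ?thesis unfolding F_def quad_form
    by (intro continuous_intros cH')
qed

lemma bound_w: "\<exists>C>0. \<forall>w. N w = 1 \<longrightarrow> norm w \<le> C"
proof -
  obtain c0 where c0: "c0 > 0" "\<forall>x. N x \<ge> c0 * norm x" using norm_lower[OF nN] by blast
  show ?thesis
  proof (intro exI[of _ "1/c0"] conjI allI impI)
    fix w assume "N w = 1" then have "c0 * norm w \<le> 1" using c0 by metis
    then show "norm w \<le> 1 / c0" using c0 by (simp add: field_simps mult.commute)
  qed (use c0 in simp)
qed

lemma F_pos: assumes "y \<noteq> 0" "N w = 1" "G y \<bullet> w = 0" shows "F y w > 0"
  unfolding F_def
proof (rule posH[OF assms(1)])
  show "\<not> (\<exists>c. w = c *\<^sub>R y)"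
  proof
    assume "\<exists>c. w = c *\<^sub>R y" then obtain c where c: "w = c *\<^sub>R y" by blast
    then have "c * N y = 0" using assms(3) euler[OF assms(1)] by simp
    then have "c = 0" using norm_pos[OF nN assms(1)] by simp
    then have "w = 0" using c by simp
    then show False using assms(2) nN unfolding is_norm2_def
      by (metis abs_zero mult_zero_left scale_zero_left zero_neq_one)
  qed
qed

lemma m0_ex: "\<exists>m0>0. \<forall>y w. norm y = 1 \<longrightarrow> N w = 1 \<longrightarrow> G y \<bullet> w = 0 \<longrightarrow> m0 \<le> F y w"
proof -
  obtain C where C: "C > 0" "\<forall>w. N w = 1 \<longrightarrow> norm w \<le> C" using bound_w by blast
  define B where "B = sphere (0::real^2) 1 \<times> cball (0::real^2) C"
  define T where "T = {p \<in> B. N (snd p) = 1}"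
  define K where "K = {p \<in> T. G (fst p) \<bullet> snd p = 0}"
  have cB: "compact B" unfolding B_def by (intro compact_Times) auto
  have clT: "closed T" unfolding T_def
    by (rule continuous_closed_preimage_constant)
       (auto intro!: continuous_on_compose2[OF norm_cont[OF nN]] continuous_intros compact_imp_closed cB)
  have cG: "continuous_on T (\<lambda>p. G (fst p))"
    by (rule continuous_on_compose2[OF G_cont continuous_on_fst]) (auto simp: T_def B_def)
  have clK: "closed K" unfolding K_def
    by (rule continuous_closed_preimage_constant) (auto intro!: continuous_intros cG clT)
  have KB: "K = K \<inter> B" unfolding K_def T_def by auto
  have cK: "compact K" using closed_Int_compact[OF clK cB] KB by simp
  have Fc: "continuous_on K (\<lambda>p. F (fst p) (snd p))"
    by (rule F_cont) (auto simp: K_def T_def B_def)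
  have memK: "(y, w) \<in> K" if "norm y = 1" "N w = 1" "G y \<bullet> w = 0" for y w
    using that C unfolding K_def T_def B_def by auto
  show ?thesis
  proof (cases "K = {}")
    case True then show ?thesis using memK by (intro exI[of _ 1]) auto
  next
    case False
    obtain k0 where k0: "k0 \<in> K" "\<forall>k\<in>K. F (fst k0) (snd k0) \<le> F (fst k) (snd k)"
      using continuous_attains_inf[OF cK False Fc] by blast
    have "F (fst k0) (snd k0) > 0" using k0(1) unfolding K_def T_def B_def
      by (intro F_pos) auto
    then show ?thesis using k0 memK by (intro exI[of _ "F (fst k0) (snd k0)"]) force
  qed
qed

lemma unif: assumes "C > 0" "\<eta> > 0"
  shows "\<exists>\<delta>>0. \<forall>x x' (w::real^2). x \<in> ann \<longrightarrow> x' \<in> ann \<longrightarrow> norm w \<le> C \<longrightarrow> dist x x' < \<delta> \<longrightarrow>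
     \<bar>F x w - F x' w\<bar> < \<eta>"
proof -
  define S where "S = ann \<times> cball (0::real^2) C"
  have cS: "compact S" unfolding S_def by (intro compact_Times compact_ann) auto
  have Fc: "continuous_on S (\<lambda>p. F (fst p) (snd p))"
    by (rule F_cont) (auto simp: S_def ann_def)
  have uc: "uniformly_continuous_on S (\<lambda>p. F (fst p) (snd p))"
    by (rule compact_uniformly_continuous[OF Fc cS])
  obtain \<delta> where d: "\<delta> > 0" "\<forall>p\<in>S. \<forall>p'\<in>S. dist p' p < \<delta> \<longrightarrow>
      dist (F (fst p') (snd p')) (F (fst p) (snd p)) < \<eta>"
    using uc assms unfolding uniformly_continuous_on_def by metis
  show ?thesis
  proof (intro exI[of _ \<delta>] conjI allI impI d(1))
    fix x x' :: "real^2" and w :: "real^2" assume h: "x \<in> ann" "x' \<in> ann" "norm w \<le> C" "dist x x' < \<delta>"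
    have "dist (x, w) (x', w) < \<delta>" using h(4) by (simp add: dist_Pair_Pair)
    then have "dist (F x w) (F x' w) < \<eta>" using d(2) h unfolding S_def
      by (metis (no_types, lifting) SigmaI dist_commute fst_conv mem_cball_0 snd_conv)
    then show "\<bar>F x w - F x' w\<bar> < \<eta>" by (simp add: dist_real_def)
  qed
qed

end


context cnorm begin

lemma point:
  assumes C: "C > 0" "\<And>w. N w = 1 \<Longrightarrow> norm w \<le> C"
  and m0: "m0 > 0" "\<And>y w. norm y = 1 \<Longrightarrow> N w = 1 \<Longrightarrow> G y \<bullet> w = 0 \<Longrightarrow> m0 \<le> F y w"
  and \<eta>: "0 < \<eta>" "\<eta> \<le> m0 / 2"
  and \<delta>: "\<delta> > 0" "\<And>x x' w. x \<in> ann \<Longrightarrow> x' \<in> ann \<Longrightarrow> norm w \<le> C \<Longrightarrow> dist x x' < \<delta> \<Longrightarrow>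
     \<bar>F x w - F x' w\<bar> < \<eta>"
  and w: "N w = 1"
  and q: "norm q \<ge> max (2*C) (C/\<delta>) + 1 + C"
  and eq: "N (q + (1/2) *\<^sub>R w) = N (q + (-1/2) *\<^sub>R w)"
  shows "\<exists>\<sigma>. \<bar>\<sigma>\<bar> * m0 \<le> \<eta> \<and> q + \<sigma> *\<^sub>R w \<in> Ldir N w"
proof -
  have nw: "norm w \<le> C" using C w by blast
  define x where "x s = q + s *\<^sub>R w" for s
  have nx: "norm (x s) \<ge> max (2*C) (C/\<delta>) + 1" if "-1/2 \<le> s" "s \<le> 1/2" for s
  proof -
    have "norm (s *\<^sub>R w) \<le> C" using that nw by (auto intro: order_trans[OF mult_left_le_one_le])
    then show ?thesis using q norm_triangle_ineq2[of q "- (s *\<^sub>R w)"] unfolding x_def by simp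
  qed
  have x0: "x s \<noteq> 0" if "-1/2 \<le> s" "s \<le> 1/2" for s
  proof -
    have "0 \<le> max (2*C) (C/\<delta>)" using C by (simp add: le_max_iff_disj)
    then have "norm (x s) \<ge> 1" using nx[OF that] by linarith
    then show ?thesis by auto
  qed
  define \<phi> where "\<phi> s = N (x s)" for s
  define \<psi> where "\<psi> s = G (x s) \<bullet> w" for s
  define \<psi>' where "\<psi>' s = F (x s) w" for s
  have dx: "(x has_derivative (\<lambda>t. t *\<^sub>R w)) (at s)" for s
    unfolding x_def by (auto intro!: derivative_eq_intros)
  have d\<phi>: "(\<phi> has_real_derivative \<psi> s) (at s)" if "-1/2 \<le> s" "s \<le> 1/2" for s
  proof -
    have "(\<phi> has_derivative (\<lambda>t. G (x s) \<bullet> (t *\<^sub>R w))) (at s)"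
      unfolding \<phi>_def using has_derivative_compose[OF dx dN[OF x0[OF that]]] .
    moreover have "(\<lambda>t. G (x s) \<bullet> (t *\<^sub>R w)) = (*) (\<psi> s)" unfolding \<psi>_def by (auto simp: mult.commute)
    ultimately show ?thesis by (simp add: has_field_derivative_def)
  qed
  have d\<psi>: "(\<psi> has_real_derivative \<psi>' s) (at s)" if "-1/2 \<le> s" "s \<le> 1/2" for s
  proof -
    have "((\<lambda>s. G (x s)) has_derivative (\<lambda>t. H (x s) *v (t *\<^sub>R w))) (at s)"
      using has_derivative_compose[OF dx dG[OF x0[OF that]]] .
    then have "(\<psi> has_derivative (\<lambda>t. (H (x s) *v (t *\<^sub>R w)) \<bullet> w)) (at s)"
      unfolding \<psi>_def by (rule has_derivative_inner_left)
    moreover have "(\<lambda>t. (H (x s) *v (t *\<^sub>R w)) \<bullet> w) = (*) (\<psi>' s)"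
      unfolding \<psi>'_def F_def by (auto simp: matrix_vector_mult_scaleR inner_commute mult.commute)
    ultimately show ?thesis by (simp add: has_field_derivative_def)
  qed
  have eq': "\<phi> (1/2) = \<phi> (-1/2)" using eq unfolding \<phi>_def x_def by simp
  obtain \<sigma> where \<sigma>: "-1/2 < \<sigma>" "\<sigma> < 1/2" "\<phi> (1/2) - \<phi> (-1/2) = (1/2 - (-1/2)) * \<psi> \<sigma>"
    using MVT2[of "-1/2" "1/2" \<phi> \<psi>, OF _ d\<phi>] by auto
  have \<psi>\<sigma>: "\<psi> \<sigma> = 0" using \<sigma>(3) eq' by simp
  define v where "v = x \<sigma>"
  define V where "V = norm v"
  have V: "V \<ge> max (2*C) (C/\<delta>) + 1" using nx[of \<sigma>] \<sigma> unfolding V_def v_def by simp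
  have M0: "max (2*C) (C/\<delta>) \<ge> 2*C" by simp
  have Vpos: "V > 0" using V C M0 by linarith
  have v0: "v \<noteq> 0" using Vpos V_def by auto
  have CV1: "C / V \<le> 1/2" using V Vpos C M0 by (simp add: field_simps)
  have CV2: "C / V < \<delta>"
  proof -
    have "max (2*C) (C/\<delta>) \<ge> C/\<delta>" by simp
    then have "C / \<delta> < V" using V by linarith
    then show ?thesis using \<delta>(1) Vpos by (simp add: field_simps)
  qed
  define y0 where "y0 = (1/V) *\<^sub>R v"
  have ny0: "norm y0 = 1" unfolding y0_def V_def using v0 by simp
  have Gy0: "G y0 = G v" unfolding y0_def using G_hom[OF v0, of "1/V"] Vpos by simp
  have Fy0: "m0 \<le> F y0 w" using m0(2)[OF ny0 w] Gy0 \<psi>\<sigma> unfolding \<psi>_def v_def by simp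
  have y0ann: "y0 \<in> ann" using ny0 unfolding ann_def by simp
  define y where "y s = (1/V) *\<^sub>R x s" for s
  have Fscale: "\<psi>' s = F (y s) w / V" if "-1/2 \<le> s" "s \<le> 1/2" for s
  proof -
    have ys0: "y s \<noteq> 0" using x0[OF that] Vpos unfolding y_def by simp
    have "V *\<^sub>R (H (V *\<^sub>R y s) *v w) = H (y s) *v w" using H_hom[OF ys0 Vpos] .
    moreover have "V *\<^sub>R y s = x s" using Vpos unfolding y_def by simp
    ultimately have "V * F (x s) w = F (y s) w" unfolding F_def
      by (metis inner_scaleR_right)
    then show ?thesis unfolding \<psi>'_def using Vpos by (simp add: field_simps)
  qed
  have close: "\<bar>F (y s) w - F y0 w\<bar> < \<eta>" if "-1/2 \<le> s" "s \<le> 1/2" for s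
  proof -
    have "y s - y0 = ((s - \<sigma>) / V) *\<^sub>R w" unfolding y_def y0_def v_def x_def
      by (simp add: algebra_simps scaleR_diff_right diff_divide_distrib flip: scaleR_add_left)
    then have "dist (y s) y0 = \<bar>s - \<sigma>\<bar> / V * norm w" using Vpos by (simp add: dist_norm)
    also have "\<dots> \<le> 1 / V * C" using that \<sigma> Vpos nw
      by (intro mult_mono divide_right_mono) auto
    finally have d: "dist (y s) y0 \<le> C / V" by simp
    have "norm (y s) \<le> norm y0 + dist (y s) y0" by (metis dist_norm norm_triangle_sub)
    moreover have "norm y0 \<le> norm (y s) + dist (y s) y0" by (metis dist_commute dist_norm norm_triangle_sub)
    ultimately have "y s \<in> ann" using d CV1 ny0 unfolding ann_def by (simp del: divide_const_simps)
    then show ?thesis using \<delta>(2)[OF _ y0ann nw] d CV2 by simp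
  qed
  have lo: "\<psi>' s \<ge> (m0/2) / V" if "-1/2 \<le> s" "s \<le> 1/2" for s
  proof -
    have "m0/2 \<le> F (y s) w" using close[OF that] Fy0 \<eta> by linarith
    then have "(m0/2) / V \<le> F (y s) w / V" using Vpos by (intro divide_right_mono) auto
    then show ?thesis using Fscale[OF that] by simp
  qed
  have var: "\<bar>\<psi>' s - \<psi>' s'\<bar> \<le> (2*\<eta>) / V"
    if "-1/2 \<le> s" "s \<le> 1/2" "-1/2 \<le> s'" "s' \<le> 1/2" for s s'
  proof -
    have "\<bar>F (y s) w - F (y s') w\<bar> \<le> 2 * \<eta>" using close[of s] close[of s'] that by linarith
    moreover have "\<psi>' s - \<psi>' s' = (F (y s) w - F (y s') w) / V" using Fscale that by (simp add: diff_divide_distrib)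
    ultimately show ?thesis using Vpos by (simp add: divide_right_mono)
  qed
  have "\<bar>\<sigma>\<bar> * ((m0/2) / V) \<le> ((2*\<eta>) / V) / 4"
    by (rule core1d[OF d\<phi> d\<psi> eq', of \<sigma>]) (use \<sigma> \<psi>\<sigma> lo var in auto)
  then have s1: "\<bar>\<sigma>\<bar> * m0 \<le> \<eta>" using Vpos by (simp add: field_simps)
  have "v \<in> Ldir N w"
  proof -
    have Nv: "N v > 0" using norm_pos[OF nN v0] .
    define yy where "yy = (1 / N v) *\<^sub>R v"
    have yy0: "yy \<noteq> 0" using v0 Nv unfolding yy_def by simp
    have Nyy: "N yy = 1" unfolding yy_def using norm_homp[OF nN, of "1/N v" v] Nv by simp
    have Gyy: "G yy = G v" unfolding yy_def using G_hom[OF v0, of "1/N v"] Nv by simp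
    have td: "tangent_directed N yy w" unfolding tangent_directed_def
      using dN[OF yy0] Gyy \<psi>\<sigma> unfolding \<psi>_def v_def by (intro exI[of _ "\<lambda>h. G yy \<bullet> h"]) auto
    have "v = N v *\<^sub>R yy" unfolding yy_def using Nv by simp
    then show ?thesis unfolding Ldir_def Let_def using w Nyy td by auto
  qed
  then show ?thesis using s1 unfolding v_def x_def by blast
qed

end


context cnorm begin

lemma main_loc: "\<forall>\<epsilon>>0. \<exists>R>0. \<forall>a b. a \<noteq> b \<and> N (b - a) = 1 \<longrightarrow>
           (\<forall>z \<in> bisector N a b - ball a R. infdist z (Lab N a b) \<le> \<epsilon>)"
proof (intro allI impI)
  fix \<epsilon> :: real assume e: "\<epsilon> > 0"
  obtain C where C: "C > 0" "\<And>w. N w = 1 \<Longrightarrow> norm w \<le> C" using bound_w by blast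
  obtain m0 where m0: "m0 > 0" "\<And>y w. norm y = 1 \<Longrightarrow> N w = 1 \<Longrightarrow> G y \<bullet> w = 0 \<Longrightarrow> m0 \<le> F y w"
    using m0_ex by blast
  define \<eta> where "\<eta> = min (m0/2) (\<epsilon>*m0/C)"
  have \<eta>: "0 < \<eta>" "\<eta> \<le> m0/2" "\<eta> \<le> \<epsilon>*m0/C" unfolding \<eta>_def using m0(1) e C(1)
    by (auto simp del: divide_const_simps)
  obtain \<delta> where \<delta>: "\<delta> > 0" "\<And>x x' w. x \<in> ann \<Longrightarrow> x' \<in> ann \<Longrightarrow> norm w \<le> C \<Longrightarrow> dist x x' < \<delta> \<Longrightarrow>
     \<bar>F x w - F x' w\<bar> < \<eta>" using unif[OF C(1) \<eta>(1)] by blast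
  define R where "R = max (2*C) (C/\<delta>) + 1 + C + C/2"
  have Rpos: "R > 0" unfolding R_def using C \<delta> by (simp add: add_pos_nonneg le_max_iff_disj)
  show "\<exists>R>0. \<forall>a b. a \<noteq> b \<and> N (b - a) = 1 \<longrightarrow>
           (\<forall>z \<in> bisector N a b - ball a R. infdist z (Lab N a b) \<le> \<epsilon>)"
  proof (intro exI[of _ R] conjI Rpos allI impI ballI)
    fix a b z assume ab: "a \<noteq> b \<and> N (b - a) = 1" and z: "z \<in> bisector N a b - ball a R"
    define w where "w = b - a"
    define q where "q = z - (1/2) *\<^sub>R (a + b)"
    have w: "N w = 1" using ab w_def by simp
    have nw: "norm w \<le> C" using C w by blast
    have e1: "q + (1/2) *\<^sub>R w = z - a" unfolding q_def w_def by (simp add: vec_eq_iff field_simps)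
    have e2: "q + (-1/2) *\<^sub>R w = z - b" unfolding q_def w_def by (simp add: vec_eq_iff field_simps)
    have "N (a - z) = N (b - z)" using z unfolding bisector_def by simp
    then have eq: "N (q + (1/2) *\<^sub>R w) = N (q + (-1/2) *\<^sub>R w)"
      unfolding e1 e2 using norm_neg[OF nN, of "z - a"] norm_neg[OF nN, of "z - b"] by simp
    have "R \<le> norm (z - a)" using z by (simp add: dist_norm norm_minus_commute)
    also have "\<dots> \<le> norm q + norm ((1/2) *\<^sub>R w)" unfolding e1[symmetric] by (rule norm_triangle_ineq)
    also have "\<dots> \<le> norm q + C/2" using nw by simp
    finally have q: "norm q \<ge> max (2*C) (C/\<delta>) + 1 + C" unfolding R_def by simp
    obtain \<sigma> where \<sigma>: "\<bar>\<sigma>\<bar> * m0 \<le> \<eta>" "q + \<sigma> *\<^sub>R w \<in> Ldir N w"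
      using point[OF C m0 \<eta>(1,2) \<delta> w q eq] by blast
    have mem: "(1/2) *\<^sub>R (a + b) + (q + \<sigma> *\<^sub>R w) \<in> Lab N a b"
      unfolding Lab_def using \<sigma>(2) w_def by auto
    have "dist z ((1/2) *\<^sub>R (a + b) + (q + \<sigma> *\<^sub>R w)) = \<bar>\<sigma>\<bar> * norm w"
      unfolding q_def dist_norm by (simp add: algebra_simps)
    also have "\<dots> \<le> \<bar>\<sigma>\<bar> * C" using nw by (simp add: mult_left_mono)
    also have "\<dots> \<le> \<epsilon>"
    proof -
      have "\<bar>\<sigma>\<bar> * m0 \<le> \<epsilon> * m0 / C" using \<sigma>(1) \<eta>(3) by linarith
      also have "\<dots> = (\<epsilon> / C) * m0" by simp
      finally have "\<bar>\<sigma>\<bar> \<le> \<epsilon> / C" using m0(1) by (rule mult_right_le_imp_le)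
      then show ?thesis using C(1) by (simp add: field_simps)
    qed
    finally show "infdist z (Lab N a b) \<le> \<epsilon>" by (rule infdist_le2[OF mem])
  qed
qed

end

theorem proposition2p1:
  fixes N :: "real^2 \<Rightarrow> real"
  assumes "C2_strictly_convex_norm N"
  shows "\<forall>\<epsilon>>0. \<exists>R>0. \<forall>a b. a \<noteq> b \<and> N (b - a) = 1 \<longrightarrow>
           (\<forall>z \<in> bisector N a b - ball a R. infdist z (Lab N a b) \<le> \<epsilon>)"
proof -
  obtain G H where "is_norm2 N"
    "\<forall>x. x \<noteq> 0 \<longrightarrow> (N has_derivative (\<lambda>h. G x \<bullet> h)) (at x)"
    "\<forall>x. x \<noteq> 0 \<longrightarrow> (G has_derivative (\<lambda>h. H x *v h)) (at x)"
    "continuous_on (UNIV - {0}) H"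
    "\<forall>x h. x \<noteq> 0 \<longrightarrow> \<not> (\<exists>c. h = c *\<^sub>R x) \<longrightarrow> h \<bullet> (H x *v h) > 0"
    using assms unfolding C2_strictly_convex_norm_def by blast
  then interpret cnorm N G H by unfold_locales auto
  show ?thesis by (rule main_loc)
qed


end
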